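(* Let $z_i=(x_i,y_i)$, $i=1,\dots,n$, be training data with $y_i\in\mathbb{R}$. Index by $b$ the $B=n^n$ bootstrap samples (ordered $n$-tuples of indices in $\{1,\dots,n\}$), and for each $b$ let $\widehat{y_j}^{(b)}\in\mathbb{R}$ be the prediction for observation $j$ of the tree grown on sample $b$, assumed to be a deterministic function of $b$. Let $N_i^{(b)}$ be the number of times observation $i$ occurs in sample $b$ and $I_j^{(b)}=\mathbf{1}(N_j^{(b)}=0)$. For a weight vector $W=(w_1,\dots,w_n)$ with $\sum_i w_i=1$, let $g_W(b)$ be the probability of drawing the bootstrap sample $b$ when each of the $n$ draws selects observation $k$ with probability $w_k$, and define $$S(\hat F_W)=\sum_{j=1}^n w_j\left(y_j-\frac{\sum_b \widehat{y_j}^{(b)} I_j^{(b)} g_W(b)}{\sum_b I_j^{(b)} g_W(b)}\right)^2 .$$ Let $\hat F=\hat F_{W_0}$ with $W_0=(1/n,\dots,1/n)$, so that $S(\hat F)=\frac1n\sum_j (y_j-\widehat{y_j}^{\mathrm{OOB}})^2$ where $\widehat{y_j}^{\mathrm{OOB}}=\frac{\sum_b \widehat{y_j}^{(b)}I_j^{(b)}}{\sum_b I_j^{(b)}}$. For $\varepsilon$ near $0$ let $\hat F_{\varepsilon,i}$ be the distribution putting weight $\frac{1-\varepsilon}{n}+\varepsilon$ on $z_i$ and $\frac{1-\varepsilon}{n}$ on each $z_j$, $j\ne i$, and define $\hat D_i=\frac1n\frac{\partial S(\hat F_{\varepsilon,i})}{\partial\varepsilon}\big|_{\varepsilon=0}$.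 Then, with $e_n=(1-1/n)^{-n}$, $$\hat D_i=\frac1n\left\{(y_i-\widehat{y_i}^{\mathrm{OOB}})^2-\frac1n\sum_j (y_j-\widehat{y_j}^{\mathrm{OOB}})^2\right\}-\frac{2e_n}{n}\sum_j (y_j-\widehat{y_j}^{\mathrm{OOB}})\left\{\frac1B\sum_b (N_i^{(b)}-1)I_j^{(b)}\big(\widehat{y_j}^{(b)}-\widehat{y_j}^{\mathrm{OOB}}\big)\right\}.$$
   Context: This is the out-of-bag (OOB) error of a bagged ensemble of regression trees under squared-error loss, viewed as a functional $S$ of a weighted empirical distribution on the training data; $\hat D_i$ is $1/n$ times the empirical influence function of $S$. All sums over $b$ range over all $B=n^n$ bootstrap samples. *)

theory Defs
  imports "HOL-Analysis.Analysis" "HOL-Library.FuncSet"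
begin

text \<open>Observations are indexed by 0..n-1. A bootstrap sample is an ordered n-tuple of
  indices, represented as an extensional function b : {..<n} -> {..<n}.\<close>

definition boot_samples :: "nat \<Rightarrow> (nat \<Rightarrow> nat) set" where
  "boot_samples n = ({..<n} \<rightarrow>\<^sub>E {..<n})"

definition Ncount :: "nat \<Rightarrow> (nat \<Rightarrow> nat) \<Rightarrow> nat \<Rightarrow> nat" where
  "Ncount n b i = card {k \<in> {..<n}. b k = i}"

definition Iind :: "nat \<Rightarrow> (nat \<Rightarrow> nat) \<Rightarrow> nat \<Rightarrow> real" where
  "Iind n b j = (if Ncount n b j = 0 then 1 else 0)"

definition gW :: "nat \<Rightarrow> (nat \<Rightarrow> real) \<Rightarrow> (nat \<Rightarrow> nat) \<Rightarrow> real" where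
  "gW n W b = (\<Prod>k<n. W (b k))"

definition S_fun :: "nat \<Rightarrow> (nat \<Rightarrow> real) \<Rightarrow> ((nat \<Rightarrow> nat) \<Rightarrow> nat \<Rightarrow> real)
    \<Rightarrow> (nat \<Rightarrow> real) \<Rightarrow> real" where
  "S_fun n y yhat W =
     (\<Sum>j<n. W j * (y j -
        (\<Sum>b\<in>boot_samples n. yhat b j * Iind n b j * gW n W b) /
        (\<Sum>b\<in>boot_samples n. Iind n b j * gW n W b))\<^sup>2)"

definition W_eps :: "nat \<Rightarrow> nat \<Rightarrow> real \<Rightarrow> nat \<Rightarrow> real" where
  "W_eps n i \<epsilon> = (\<lambda>j. (1 - \<epsilon>) / real n + (if j = i then \<epsilon> else 0))"

definition y_oob :: "nat \<Rightarrow> ((nat \<Rightarrow> nat) \<Rightarrow> nat \<Rightarrow> real) \<Rightarrow> nat \<Rightarrow> real" where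
  "y_oob n yhat j =
     (\<Sum>b\<in>boot_samples n. yhat b j * Iind n b j) / (\<Sum>b\<in>boot_samples n. Iind n b j)"

definition D_hat :: "nat \<Rightarrow> (nat \<Rightarrow> real) \<Rightarrow> ((nat \<Rightarrow> nat) \<Rightarrow> nat \<Rightarrow> real) \<Rightarrow> nat \<Rightarrow> real" where
  "D_hat n y yhat i = (1 / real n) * deriv (\<lambda>\<epsilon>. S_fun n y yhat (W_eps n i \<epsilon>)) 0"

end

theory Submission
  imports Defs
begin

lemma count_sum:
  "(\<Sum>k<n. (if b k = i then 1 else 0 :: real)) = real (Ncount n b i)"
  unfolding Ncount_def by (simp add: sum.If_cases) (rule arg_cong[where f=card], auto)

lemma W0: "W_eps n i 0 = (\<lambda>j. 1 / real n)"
  unfolding W_eps_def by auto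

lemma g0: "gW n (W_eps n i 0) b = 1 / real n ^ n"
  unfolding gW_def W0 by (simp add: power_one_over)

lemma gder:
  assumes "n \<ge> 1"
  shows "((\<lambda>e. gW n (W_eps n i e) b) has_field_derivative
          (real n * (real (Ncount n b i) - 1) / real n ^ n)) (at 0)"
proof -
  have d: "((\<lambda>e. W_eps n i e (b k)) has_field_derivative (-1 / real n + (if b k = i then 1 else 0))) (at 0)" for k
    unfolding W_eps_def using assms
    by (auto intro!: derivative_eq_intros simp: field_simps)
  have nz: "W_eps n i 0 (b k) \<noteq> 0" for k using assms by (simp add: W0)
  have "((\<lambda>e. \<Prod>k<n. W_eps n i e (b k)) has_field_derivative
      ((\<Prod>k<n. W_eps n i 0 (b k)) * (\<Sum>k<n. (-1 / real n + (if b k = i then 1 else 0)) / W_eps n i 0 (b k)))) (at 0)"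
    using has_field_derivative_prod'[of "{..<n}" "\<lambda>k e. W_eps n i e (b k)" 0 "\<lambda>k. -1 / real n + (if b k = i then 1 else 0)"]
      nz d by auto
  moreover have "(\<Prod>k<n. W_eps n i 0 (b k)) * (\<Sum>k<n. (-1 / real n + (if b k = i then 1 else 0)) / W_eps n i 0 (b k))
     = real n * (real (Ncount n b i) - 1) / real n ^ n"
  proof -
    have "(\<Sum>k<n. (-1 / real n + (if b k = i then 1 else 0)) / W_eps n i 0 (b k))
        = (\<Sum>k<n. real n * (-1 / real n) + real n * (if b k = i then 1 else 0))"
      using assms by (intro sum.cong) (auto simp: W0 field_simps)
    also have "\<dots> = real n * (real (Ncount n b i) - 1)"
      using assms by (simp only: sum.distrib sum_distrib_left[symmetric] count_sum) (simp add: algebra_simps)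
    finally show ?thesis by (simp add: W0 power_one_over)
  qed
  ultimately show ?thesis unfolding gW_def by simp
qed

lemma sumI:
  assumes "j < n"
  shows "(\<Sum>b\<in>boot_samples n. Iind n b j) = real ((n - 1) ^ n)"
proof -
  have fin: "finite (boot_samples n)" unfolding boot_samples_def by (simp add: finite_PiE)
  have "(\<Sum>b\<in>boot_samples n. Iind n b j) = real (card {b\<in>boot_samples n. Ncount n b j = 0})"
    unfolding Iind_def using fin by (simp add: sum.If_cases) (rule arg_cong[where f=card], auto)
  also have "{b\<in>boot_samples n. Ncount n b j = 0} = PiE {..<n} (\<lambda>_. {..<n} - {j})"
    unfolding boot_samples_def Ncount_def by (auto simp: PiE_iff extensional_def)
  also have "card \<dots> = (n - 1) ^ n" using assms by (simp add: card_PiE)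
  finally show ?thesis .
qed

theorem theorem1:
  fixes n :: nat and y :: "nat \<Rightarrow> real" and yhat :: "(nat \<Rightarrow> nat) \<Rightarrow> nat \<Rightarrow> real"
    and i :: nat
  assumes "n \<ge> 2" and "i < n"
  shows "(\<lambda>\<epsilon>. S_fun n y yhat (W_eps n i \<epsilon>)) differentiable (at 0) \<and>
    D_hat n y yhat i =
      (1 / real n) * ((y i - y_oob n yhat i)\<^sup>2 - (1 / real n) * (\<Sum>j<n. (y j - y_oob n yhat j)\<^sup>2))
      - (2 * inverse ((1 - 1 / real n) ^ n) / real n) *
        (\<Sum>j<n. (y j - y_oob n yhat j) *
          ((1 / real (n ^ n)) * (\<Sum>b\<in>boot_samples n.
              (real (Ncount n b i) - 1) * Iind n b j * (yhat b j - y_oob n yhat j))))"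
proof -
  define N where "N = real n ^ n"
  define m where "m = real ((n - 1) ^ n)"
  define oob where "oob = y_oob n yhat"
  define r where "r j = y j - oob j" for j
  define T where "T j = (\<Sum>b\<in>boot_samples n. (real (Ncount n b i) - 1) * Iind n b j * (yhat b j - oob j))" for j
  define A where "A j e = (\<Sum>b\<in>boot_samples n. yhat b j * Iind n b j * gW n (W_eps n i e) b)" for j e
  define C where "C j e = (\<Sum>b\<in>boot_samples n. Iind n b j * gW n (W_eps n i e) b)" for j e
  define P where "P j = (\<Sum>b\<in>boot_samples n. yhat b j * Iind n b j * (real (Ncount n b i) - 1))" for j
  define R where "R j = (\<Sum>b\<in>boot_samples n. Iind n b j * (real (Ncount n b i) - 1))" for j
  define sY where "sY j = (\<Sum>b\<in>boot_samples n. yhat b j * Iind n b j)" for j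
  have n1: "n \<ge> 1" using assms by simp
  have Npos: "N > 0" unfolding N_def using n1 by simp
  have mpos: "m > 0" unfolding m_def using assms by simp
  have sI: "(\<Sum>b\<in>boot_samples n. Iind n b j) = m" if "j < n" for j
    using sumI[OF that] unfolding m_def .
  have oob_eq: "oob j = sY j / m" if "j < n" for j
    unfolding oob_def y_oob_def sY_def using sI[OF that] by simp
  have A0: "A j 0 = sY j / N" for j
    unfolding A_def sY_def g0 N_def by (simp add: sum_divide_distrib)
  have C0: "C j 0 = m / N" if "j < n" for j
    unfolding C_def g0 N_def using sI[OF that] by (simp add: sum_divide_distrib[symmetric])
  have hA: "(A j has_field_derivative (real n / N * P j)) (at 0)" for j
  proof -
    have "(A j has_field_derivative (\<Sum>b\<in>boot_samples n. yhat b j * Iind n b j * (real n * (real (Ncount n b i) - 1) / real n ^ n))) (at 0)"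
      unfolding A_def by (intro DERIV_sum DERIV_cmult gder n1)
    moreover have "(\<Sum>b\<in>boot_samples n. yhat b j * Iind n b j * (real n * (real (Ncount n b i) - 1) / real n ^ n)) = real n / N * P j"
      unfolding P_def N_def by (simp add: sum_distrib_left field_simps)
    ultimately show ?thesis by simp
  qed
  have hC: "(C j has_field_derivative (real n / N * R j)) (at 0)" for j
  proof -
    have "(C j has_field_derivative (\<Sum>b\<in>boot_samples n. Iind n b j * (real n * (real (Ncount n b i) - 1) / real n ^ n))) (at 0)"
      unfolding C_def by (intro DERIV_sum DERIV_cmult gder n1)
    moreover have "(\<Sum>b\<in>boot_samples n. Iind n b j * (real n * (real (Ncount n b i) - 1) / real n ^ n)) = real n / N * R j"
      unfolding R_def N_def by (simp add: sum_distrib_left field_simps)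
    ultimately show ?thesis by simp
  qed
  have TPR: "T j = P j - oob j * R j" for j
    unfolding T_def P_def R_def by (simp add: sum_distrib_left sum_subtractf[symmetric] algebra_simps)
  have hQ: "((\<lambda>e. A j e / C j e) has_field_derivative (real n * T j / m)) (at 0)" if "j < n" for j
  proof -
    have nz: "C j 0 \<noteq> 0" using C0[OF that] mpos Npos by simp
    have "((\<lambda>e. A j e / C j e) has_field_derivative
       ((real n / N * P j) * C j 0 - A j 0 * (real n / N * R j)) / (C j 0 * C j 0)) (at 0)"
      using DERIV_divide[OF hA[of j] hC[of j] nz] .
    moreover have "((real n / N * P j) * C j 0 - A j 0 * (real n / N * R j)) / (C j 0 * C j 0) = real n * T j / m"
      using mpos Npos unfolding TPR A0 C0[OF that] oob_eq[OF that] by (simp add: field_simps)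
    ultimately show ?thesis by simp
  qed
  have Q0: "A j 0 / C j 0 = oob j" if "j < n" for j
    using mpos Npos unfolding A0 C0[OF that] oob_eq[OF that] by simp
  have Sdef: "S_fun n y yhat (W_eps n i e) = (\<Sum>j<n. W_eps n i e j * (y j - A j e / C j e)\<^sup>2)" for e
    unfolding S_fun_def A_def C_def ..
  define E where "E = (\<Sum>j<n. (-1 / real n + (if j = i then 1 else 0)) * (r j)\<^sup>2
       + (1 / real n) * (2 * r j * - (real n * T j / m)))"
  have hS: "((\<lambda>e. S_fun n y yhat (W_eps n i e)) has_field_derivative E) (at 0)"
    unfolding Sdef E_def
  proof (rule DERIV_sum)
    fix j assume j: "j \<in> {..<n}"
    have w: "((\<lambda>e. W_eps n i e j) has_field_derivative (-1 / real n + (if j = i then 1 else 0))) (at 0)"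
      unfolding W_eps_def using n1 by (auto intro!: derivative_eq_intros simp: field_simps)
    show "((\<lambda>e. W_eps n i e j * (y j - A j e / C j e)\<^sup>2) has_field_derivative
       (-1 / real n + (if j = i then 1 else 0)) * (r j)\<^sup>2 + (1 / real n) * (2 * r j * - (real n * T j / m))) (at 0)"
    proof -
      have jn: "j < n" using j by simp
      have q: "((\<lambda>e. y j - A j e / C j e) has_field_derivative 0 - real n * T j / m) (at 0)"
        by (rule DERIV_diff[OF DERIV_const hQ[OF jn]])
      have sq: "((\<lambda>e. (y j - A j e / C j e) ^ 2) has_field_derivative
          of_nat 2 * ((0 - real n * T j / m) * (y j - A j 0 / C j 0) ^ (2 - Suc 0))) (at 0)"
        by (rule DERIV_power[OF q])
      have pr: "((\<lambda>e. W_eps n i e j * (y j - A j e / C j e) ^ 2) has_field_derivative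
          (-1 / real n + (if j = i then 1 else 0)) * (y j - A j 0 / C j 0) ^ 2
          + of_nat 2 * ((0 - real n * T j / m) * (y j - A j 0 / C j 0) ^ (2 - Suc 0)) * W_eps n i 0 j) (at 0)"
        by (rule DERIV_mult[OF w sq])
      have eq: "(-1 / real n + (if j = i then 1 else 0)) * (y j - A j 0 / C j 0) ^ 2
          + of_nat 2 * ((0 - real n * T j / m) * (y j - A j 0 / C j 0) ^ (2 - Suc 0)) * W_eps n i 0 j
          = (-1 / real n + (if j = i then 1 else 0)) * (r j)\<^sup>2 + (1 / real n) * (2 * r j * - (real n * T j / m))"
        unfolding Q0[OF jn] W0 r_def by simp
      show ?thesis using pr unfolding eq .
    qed
  qed
  have diff: "(\<lambda>e. S_fun n y yhat (W_eps n i e)) differentiable (at 0)"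
    using differentiableI[OF has_field_derivative_imp_has_derivative[OF hS]] .
  have D: "D_hat n y yhat i = E / real n"
    unfolding D_hat_def using DERIV_imp_deriv[OF hS] by simp
  have E1: "E = (r i)\<^sup>2 - (1 / real n) * (\<Sum>j<n. (r j)\<^sup>2) - (2 / m) * (\<Sum>j<n. r j * T j)"
  proof -
    have s1: "(\<Sum>j<n. (-1 / real n + (if j = i then 1 else 0)) * (r j)\<^sup>2)
        = (\<Sum>j<n. (if j = i then (r j)\<^sup>2 else 0)) - (1 / real n) * (\<Sum>j<n. (r j)\<^sup>2)"
    proof -
      have s1a: "(\<Sum>j<n. (-1 / real n + (if j = i then 1 else 0)) * (r j)\<^sup>2)
          = (\<Sum>j<n. (-1 / real n) * (r j)\<^sup>2) + (\<Sum>j<n. (if j = i then (r j)\<^sup>2 else 0))"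
        unfolding sum.distrib[symmetric] by (rule sum.cong) (auto simp: algebra_simps)
      have s1b: "(\<Sum>j<n. (-1 / real n) * (r j)\<^sup>2) = (-1 / real n) * (\<Sum>j<n. (r j)\<^sup>2)"
        by (simp only: sum_distrib_left[symmetric])
      show ?thesis unfolding s1a s1b by simp
    qed
    have s2: "(\<Sum>j<n. (1 / real n) * (2 * r j * - (real n * T j / m))) = - ((2 / m) * (\<Sum>j<n. r j * T j))"
      using n1 by (auto simp add: sum_distrib_left sum_negf[symmetric] intro!: sum.cong)
    have "E = (\<Sum>j<n. (if j = i then (r j)\<^sup>2 else 0)) - (1 / real n) * (\<Sum>j<n. (r j)\<^sup>2)
          - (2 / m) * (\<Sum>j<n. r j * T j)"
      unfolding E_def sum.distrib s1 s2 by simp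
    then show ?thesis using assms(2) by simp
  qed
  have key: "inverse ((1 - 1 / real n) ^ n) * (1 / real (n ^ n)) = 1 / m"
  proof -
    have "(1 - 1 / real n) ^ n * real (n ^ n) = ((1 - 1 / real n) * real n) ^ n"
      by (simp add: power_mult_distrib)
    also have "(1 - 1 / real n) * real n = real (n - 1)" using n1 by (simp add: field_simps of_nat_diff)
    finally have "(1 - 1 / real n) ^ n * real (n ^ n) = m" unfolding m_def by simp
    then show ?thesis using mpos by (simp add: field_simps)
  qed
  have "(2 * inverse ((1 - 1 / real n) ^ n) / real n) *
        (\<Sum>j<n. r j * ((1 / real (n ^ n)) * T j))
      = (2 / real n) * (inverse ((1 - 1 / real n) ^ n) * (1 / real (n ^ n))) * (\<Sum>j<n. r j * T j)"
    unfolding sum_distrib_left by (rule sum.cong) (simp_all add: mult_ac)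
  also have "\<dots> = (2 / real n) * (1 / m) * (\<Sum>j<n. r j * T j)" by (simp only: key)
  finally have F: "(2 * inverse ((1 - 1 / real n) ^ n) / real n) *
        (\<Sum>j<n. r j * ((1 / real (n ^ n)) * T j)) = (2 / real n) * (1 / m) * (\<Sum>j<n. r j * T j)" .
  have "D_hat n y yhat i = (1 / real n) * ((r i)\<^sup>2 - (1 / real n) * (\<Sum>j<n. (r j)\<^sup>2))
       - (2 * inverse ((1 - 1 / real n) ^ n) / real n) * (\<Sum>j<n. r j * ((1 / real (n ^ n)) * T j))"
    unfolding F D E1 using n1 by (simp add: field_simps)
  then show ?thesis using diff unfolding r_def T_def oob_def by simp
qed

end
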